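(* Fix an integer $k\ge3$ and consider the utility function described in the context. Suppose every $k$-star network is pairwise stable, where this ranges over all numbers of nodes $n\ge 2k$ and all allowed distributions of leaves. Then necessarily $$\gamma=0 \quad\text{and}\quad c=b_1-b_3.$$
   Context: A $k$-star network ($k\ge3$) on $n\ge 2k$ nodes consists of $k$ "center" nodes that are pairwise adjacent, forming a clique. Every other node is a leaf adjacent to exactly one center and to nothing else. Each center has at least one leaf, and the numbers of leaves of any two centers differ by at most one. Networks are finite simple undirected graphs whose vertices (nodes) are self-interested agents. Parameters: benefits $b_1>b_2>b_3>b_4>\dots>0$, where $b_i$ is the benefit a node obtains from a node at distance $i$; a link cost $c$ per immediate neighbor; and an intermediation fraction $\gamma$ with $0\le\gamma<1$. (Entry fees play no role here, since all nodes are already in the network.) Notation: $N$ is the set of nodes, $d_j$ the degree of $j$, and $l(j,w)$ the graph distance. A node $x$ is essential for a pair $y,z$ (with $x\notin\{y,z\}$) if $x$ lies on every path joining $y$ and $z$. Write $E(y,z)$ for the set of nodes essential for $y,z$ and $e(y,z)=|E(y,z)|$. Only pairs joined by a path contribute to the sums below. Utility of node $j$ in network $g$: $$u_j(g)=d_j(b_1-c)+\sum_{w\in N,\ l(j,w)>1}b_{l(j,w)}-\sum_{w\in N,\ E(j,w)\ne\emptyset}\gamma\, b_{l(j,w)}+\sum_{y,z\in N,\ j\in E(y,z)}\frac{\gamma}{e(y,z)}\,2\,b_{l(y,z)}.$$ Pairwise stability: $g$ is pairwise stable if (a) for every link $(i,j)\in g$, $u_i(g\setminus\{(i,j)\})\le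 u_i(g)$ and $u_j(g\setminus\{(i,j)\})\le u_j(g)$; and (b) for every non-link $(i,j)\notin g$, if $u_i(g\cup\{(i,j)\})>u_i(g)$ then $u_j(g\cup\{(i,j)\})<u_j(g)$. *)

theory Defs
  imports Complex_Main
begin

text \<open>Networks: nodes are the naturals {..<n}; a network is a set of ordered pairs
  (x,y) that is symmetric, irreflexive and contained in the node set.
  Benefits b i for i \<ge> 1 (b 0 is irrelevant).\<close>

definition nodes :: "nat \<Rightarrow> nat set" where
  "nodes n = {..<n}"

definition is_network :: "nat \<Rightarrow> (nat \<times> nat) set \<Rightarrow> bool" where
  "is_network n g \<longleftrightarrow> g \<subseteq> nodes n \<times> nodes n \<and> (\<forall>x y. (x,y) \<in> g \<longrightarrow> (y,x) \<in> g)
     \<and> (\<forall>x. (x,x) \<notin> g)"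

definition add_link :: "(nat \<times> nat) set \<Rightarrow> nat \<Rightarrow> nat \<Rightarrow> (nat \<times> nat) set" where
  "add_link g i j = g \<union> {(i,j),(j,i)}"

definition del_link :: "(nat \<times> nat) set \<Rightarrow> nat \<Rightarrow> nat \<Rightarrow> (nat \<times> nat) set" where
  "del_link g i j = g - {(i,j),(j,i)}"

definition degree :: "(nat \<times> nat) set \<Rightarrow> nat \<Rightarrow> nat" where
  "degree g j = card {w. (j,w) \<in> g}"

definition is_path :: "(nat \<times> nat) set \<Rightarrow> nat list \<Rightarrow> nat \<Rightarrow> nat \<Rightarrow> bool" where
  "is_path g p y z \<longleftrightarrow> p \<noteq> [] \<and> hd p = y \<and> last p = z \<and> distinct p \<and>
     (\<forall>i. Suc i < length p \<longrightarrow> (p ! i, p ! Suc i) \<in> g)"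

definition joined :: "(nat \<times> nat) set \<Rightarrow> nat \<Rightarrow> nat \<Rightarrow> bool" where
  "joined g y z \<longleftrightarrow> (\<exists>p. is_path g p y z)"

definition dist :: "(nat \<times> nat) set \<Rightarrow> nat \<Rightarrow> nat \<Rightarrow> nat" where
  "dist g y z = (LEAST m. \<exists>p. is_path g p y z \<and> length p = Suc m)"

definition essential :: "(nat \<times> nat) set \<Rightarrow> nat \<Rightarrow> nat \<Rightarrow> nat \<Rightarrow> bool" where
  "essential g x y z \<longleftrightarrow> x \<noteq> y \<and> x \<noteq> z \<and> (\<forall>p. is_path g p y z \<longrightarrow> x \<in> set p)"

definition ess_set :: "nat \<Rightarrow> (nat \<times> nat) set \<Rightarrow> nat \<Rightarrow> nat \<Rightarrow> nat set" where
  "ess_set n g y z = {x \<in> nodes n. essential g x y z}"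

text \<open>Utility of node j. The intermediation income sums over unordered pairs {y,z}
  (encoded as y < z) joined by a path.\<close>
definition utility :: "(nat \<Rightarrow> real) \<Rightarrow> real \<Rightarrow> real \<Rightarrow> nat \<Rightarrow> (nat \<times> nat) set \<Rightarrow> nat \<Rightarrow> real" where
  "utility b c \<gamma> n g j =
     real (degree g j) * (b 1 - c)
     + (\<Sum>w \<in> {w \<in> nodes n. joined g j w \<and> dist g j w > 1}. b (dist g j w))
     - (\<Sum>w \<in> {w \<in> nodes n. joined g j w \<and> ess_set n g j w \<noteq> {}}. \<gamma> * b (dist g j w))
     + (\<Sum>yz \<in> {(y,z). y \<in> nodes n \<and> z \<in> nodes n \<and> y < z \<and> joined g y z \<and> j \<in> ess_set n g y z}.
          \<gamma> / real (card (ess_set n g (fst yz) (snd yz))) * 2 * b (dist g (fst yz) (snd yz)))"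

definition pairwise_stable :: "(nat \<Rightarrow> real) \<Rightarrow> real \<Rightarrow> real \<Rightarrow> nat \<Rightarrow> (nat \<times> nat) set \<Rightarrow> bool" where
  "pairwise_stable b c \<gamma> n g \<longleftrightarrow>
     (\<forall>i j. (i,j) \<in> g \<longrightarrow>
        utility b c \<gamma> n (del_link g i j) i \<le> utility b c \<gamma> n g i \<and>
        utility b c \<gamma> n (del_link g i j) j \<le> utility b c \<gamma> n g j) \<and>
     (\<forall>i \<in> nodes n. \<forall>j \<in> nodes n. i \<noteq> j \<and> (i,j) \<notin> g \<longrightarrow>
        utility b c \<gamma> n (add_link g i j) i > utility b c \<gamma> n g i \<longrightarrow>
        utility b c \<gamma> n (add_link g i j) j < utility b c \<gamma> n g j)"

definition k_star_network :: "nat \<Rightarrow> nat \<Rightarrow> (nat \<times> nat) set \<Rightarrow> bool" where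
  "k_star_network k n g \<longleftrightarrow> n \<ge> 2 * k \<and> is_network n g \<and>
     (\<exists>C. C \<subseteq> nodes n \<and> card C = k \<and>
        (\<forall>x \<in> C. \<forall>y \<in> C. x \<noteq> y \<longrightarrow> (x,y) \<in> g) \<and>
        (\<forall>v \<in> nodes n - C. \<exists>x \<in> C. {w. (v,w) \<in> g} = {x}) \<and>
        (\<forall>x \<in> C. {v \<in> nodes n - C. (x,v) \<in> g} \<noteq> {}) \<and>
        (\<forall>x \<in> C. \<forall>y \<in> C. card {v \<in> nodes n - C. (x,v) \<in> g}
                              \<le> card {v \<in> nodes n - C. (y,v) \<in> g} + 1))"

end

theory Submission
  imports Defs
begin


definition symg :: "(nat \<times> nat) set \<Rightarrow> bool" where
  "symg g \<longleftrightarrow> (\<forall>x y. (x,y) \<in> g \<longrightarrow> (y,x) \<in> g)"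

lemma is_path_single[simp]: "is_path g [a] y z \<longleftrightarrow> a = y \<and> a = z"
  by (auto simp: is_path_def)

lemma is_path_nil[simp]: "\<not> is_path g [] y z"
  by (auto simp: is_path_def)

lemma is_path_cons2:
  "is_path g (a#b#p) y z \<longleftrightarrow> a = y \<and> (a,b) \<in> g \<and> a \<notin> set (b#p) \<and> is_path g (b#p) b z"
proof -
  have e: "(\<forall>i. Suc i < length (a#b#p) \<longrightarrow> ((a#b#p)!i, (a#b#p)! Suc i) \<in> g) \<longleftrightarrow>
     (a,b)\<in>g \<and> (\<forall>i. Suc i < length (b#p) \<longrightarrow> ((b#p)!i, (b#p)!Suc i) \<in> g)"
  proof
    assume H: "\<forall>i. Suc i < length (a#b#p) \<longrightarrow> ((a#b#p)!i, (a#b#p)! Suc i) \<in> g"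
    show "(a,b)\<in>g \<and> (\<forall>i. Suc i < length (b#p) \<longrightarrow> ((b#p)!i, (b#p)!Suc i) \<in> g)"
    proof (intro conjI allI impI)
      show "(a,b) \<in> g" using H[rule_format, of 0] by simp
      fix i assume "Suc i < length (b#p)"
      then show "((b#p)!i, (b#p)!Suc i) \<in> g" using H[rule_format, of "Suc i"] by simp
    qed
  next
    assume H: "(a,b)\<in>g \<and> (\<forall>i. Suc i < length (b#p) \<longrightarrow> ((b#p)!i, (b#p)!Suc i) \<in> g)"
    show "\<forall>i. Suc i < length (a#b#p) \<longrightarrow> ((a#b#p)!i, (a#b#p)! Suc i) \<in> g"
    proof (intro allI impI)
      fix i assume "Suc i < length (a#b#p)"
      then show "((a#b#p)!i, (a#b#p)! Suc i) \<in> g" using H by (cases i) auto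
    qed
  qed
  show ?thesis unfolding is_path_def e by auto
qed

fun walk :: "(nat \<times> nat) set \<Rightarrow> nat \<Rightarrow> nat \<Rightarrow> nat \<Rightarrow> bool" where
  "walk g 0 y z = (y = z)"
| "walk g (Suc m) y z = (\<exists>u. (y,u) \<in> g \<and> walk g m u z)"

lemma path_walk: "is_path g p y z \<Longrightarrow> walk g (length p - 1) y z"
proof (induction p arbitrary: y)
  case Nil then show ?case by simp
next
  case (Cons a p)
  show ?case
  proof (cases p)
    case Nil then show ?thesis using Cons.prems by simp
  next
    case (Cons b q)
    with Cons.prems have "a = y" "(a,b) \<in> g" "is_path g p b z" by (auto simp: is_path_cons2)
    with Cons.IH[of b] Cons show ?thesis by auto
  qed
qed

lemma path_joined: "is_path g p y z \<Longrightarrow> joined g y z"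
  by (auto simp: joined_def)

lemma dist_eqI:
  assumes "is_path g p y z" "length p = Suc m" "\<And>m'. m' < m \<Longrightarrow> \<not> walk g m' y z"
  shows "dist g y z = m"
  unfolding dist_def
proof (rule Least_equality)
  show "\<exists>p. is_path g p y z \<and> length p = Suc m" using assms by blast
next
  fix m' assume "\<exists>p. is_path g p y z \<and> length p = Suc m'"
  then obtain q where "is_path g q y z" "length q = Suc m'" by blast
  then have "walk g m' y z" using path_walk by fastforce
  then show "m \<le> m'" using assms(3) by (meson not_le)
qed

lemma dist_path:
  assumes "joined g y z"
  shows "\<exists>p. is_path g p y z \<and> length p = Suc (dist g y z)"
proof -
  obtain p where p: "is_path g p y z" using assms by (auto simp: joined_def)
  then have "length p = Suc (length p - 1)" by (cases p) auto
  with p have "\<exists>m p. is_path g p y z \<and> length p = Suc m" by blast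
  then show ?thesis unfolding dist_def by (rule LeastI_ex)
qed

lemma dist_self[simp]: "dist g y y = 0"
  using dist_eqI[of g "[y]" y y 0] by simp

lemma dist_adj: "(y,z) \<in> g \<Longrightarrow> y \<noteq> z \<Longrightarrow> dist g y z = 1"
  by (rule dist_eqI[of g "[y,z]"]) (auto simp: is_path_cons2 less_Suc_eq)

lemma joined_adj: "(y,z) \<in> g \<Longrightarrow> y \<noteq> z \<Longrightarrow> joined g y z"
  by (rule path_joined[of g "[y,z]"]) (auto simp: is_path_cons2)

lemma joined_self[simp]: "joined g y y"
  by (rule path_joined[of g "[y]"]) simp

lemma ess_subset_path:
  assumes "is_path g p y z" shows "ess_set n g y z \<subseteq> set p - {y,z}"
  using assms by (auto simp: ess_set_def essential_def)

lemma ess_memI: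
  assumes "x \<in> nodes n" "x \<noteq> y" "x \<noteq> z" "\<And>p. is_path g p y z \<Longrightarrow> x \<in> set p"
  shows "x \<in> ess_set n g y z"
  using assms by (auto simp: ess_set_def essential_def)

lemma finite_ess[simp]: "finite (ess_set n g y z)"
  by (auto simp: ess_set_def nodes_def)

lemma ess_self[simp]: "ess_set n g y y = {}"
  using ess_subset_path[of g "[y]" y y n] by simp

lemma ess_adj: "(y,z) \<in> g \<Longrightarrow> ess_set n g y z = {}"
  using ess_subset_path[of g "[y,z]" y z n] ess_self[of n g y]
  by (cases "y = z") (auto simp: is_path_cons2)

lemma ess_dist:
  assumes "joined g y z" "ess_set n g y z \<noteq> {}"
  shows "dist g y z \<ge> 2"
proof (rule ccontr)
  assume "\<not> dist g y z \<ge> 2"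
  then have le: "dist g y z \<le> 1" by simp
  obtain p where p: "is_path g p y z" "length p = Suc (dist g y z)" using dist_path[OF assms(1)] by blast
  obtain x where x: "x \<in> ess_set n g y z" using assms(2) by blast
  have "set p \<subseteq> {y,z}"
  proof (cases p)
    case Nil then show ?thesis using p by simp
  next
    case (Cons a q)
    show ?thesis
    proof (cases q)
      case Nil then show ?thesis using p Cons by simp
    next
      case (Cons b r)
      have "length p = Suc (Suc (length r))" using \<open>p = a#q\<close> Cons by simp
      then have "r = []" using p(2) le by simp
      then show ?thesis using p \<open>p = a#q\<close> Cons by (auto simp: is_path_cons2)
    qed
  qed
  then show False using x ess_subset_path[OF p(1), of n] by auto
qed

lemma path_rev:
  assumes "symg g" "is_path g p y z" shows "is_path g (rev p) z y"
proof -
  have ne: "p \<noteq> []" "hd p = y" "last p = z" "distinct p"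
    and E: "\<And>i. Suc i < length p \<Longrightarrow> (p ! i, p ! Suc i) \<in> g"
    using assms(2) by (auto simp: is_path_def)
  have "\<And>i. Suc i < length (rev p) \<Longrightarrow> (rev p ! i, rev p ! Suc i) \<in> g"
  proof -
    fix i assume i: "Suc i < length (rev p)"
    define m where "m = length p - Suc (Suc i)"
    have "Suc m < length p" "Suc m = length p - Suc i" using i by (auto simp: m_def)
    then have "(p ! m, p ! Suc m) \<in> g" using E by blast
    then have "(p ! Suc m, p ! m) \<in> g" using assms(1) by (auto simp: symg_def)
    moreover have "rev p ! i = p ! Suc m" "rev p ! Suc i = p ! m"
      using i \<open>Suc m = length p - Suc i\<close> by (auto simp: rev_nth m_def)
    ultimately show "(rev p ! i, rev p ! Suc i) \<in> g" by simp
  qed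
  then show ?thesis using ne by (auto simp: is_path_def hd_rev last_rev)
qed

lemma joined_sym: "symg g \<Longrightarrow> joined g y z = joined g z y"
  by (auto simp: joined_def dest: path_rev)

lemma dist_sym: assumes "symg g" shows "dist g y z = dist g z y"
proof -
  have "\<And>m. (\<exists>p. is_path g p y z \<and> length p = Suc m) = (\<exists>p. is_path g p z y \<and> length p = Suc m)"
    using path_rev[OF assms] by (metis length_rev)
  then show ?thesis unfolding dist_def by simp
qed

lemma ess_sym: assumes "symg g" shows "ess_set n g y z = ess_set n g z y"
proof -
  have "\<And>x. (\<forall>p. is_path g p y z \<longrightarrow> x \<in> set p) = (\<forall>p. is_path g p z y \<longrightarrow> x \<in> set p)"
    using path_rev[OF assms] by (metis set_rev)
  then show ?thesis unfolding ess_set_def essential_def by auto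
qed

lemma leaf_interior:
  assumes "symg g" "{w. (v,w) \<in> g} \<subseteq> {u}" "is_path g p y z" "v \<in> set p"
  shows "v = y \<or> v = z"
proof (rule ccontr)
  assume nv: "\<not> (v = y \<or> v = z)"
  have ne: "p \<noteq> []" "hd p = y" "last p = z" "distinct p"
    and E: "\<And>i. Suc i < length p \<Longrightarrow> (p ! i, p ! Suc i) \<in> g"
    using assms(3) by (auto simp: is_path_def)
  obtain m where m: "m < length p" "p ! m = v" using assms(4) by (metis in_set_conv_nth)
  have "m \<noteq> 0"
  proof
    assume "m = 0" then show False using m ne nv by (simp add: hd_conv_nth)
  qed
  moreover have "m \<noteq> length p - 1" using m ne nv by (auto simp: last_conv_nth)
  ultimately obtain m' where m': "m = Suc m'" "Suc m < length p" using m by (cases m) auto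
  have "(p ! m', v) \<in> g" using E[of m'] m m' by auto
  then have "(v, p ! m') \<in> g" using assms(1) by (auto simp: symg_def)
  then have a: "p ! m' = u" using assms(2) by auto
  have "(v, p ! Suc m) \<in> g" using E[of m] m m' by auto
  then have "p ! Suc m = u" using assms(2) by auto
  with a have "p ! m' = p ! Suc m" by simp
  then show False using ne(4) m' by (simp add: nth_eq_iff_index_eq)
qed

lemma leaf_start:
  assumes "{w. (y,w) \<in> g} \<subseteq> {u}" "is_path g p y z" "y \<noteq> z"
  shows "u \<in> set p"
proof -
  have ne: "p \<noteq> []" "hd p = y" "last p = z"
    and E: "\<And>i. Suc i < length p \<Longrightarrow> (p ! i, p ! Suc i) \<in> g"
    using assms(2) by (auto simp: is_path_def)
  obtain a q where pq: "p = a # q" using ne by (cases p) auto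
  have "q \<noteq> []" using pq ne assms(3) by auto
  then have "length p \<ge> 2" using pq by (cases q) auto
  then have "(p ! 0, p ! 1) \<in> g" using E[of 0] by auto
  moreover have "p ! 0 = y" using ne by (simp add: hd_conv_nth)
  ultimately have "p ! 1 = u" using assms(1) by auto
  then show ?thesis using \<open>length p \<ge> 2\<close> by (metis nth_mem One_nat_def Suc_1 Suc_le_lessD)
qed

lemma leaf_end:
  assumes "symg g" "{w. (z,w) \<in> g} \<subseteq> {u}" "is_path g p y z" "y \<noteq> z"
  shows "u \<in> set p"
  using leaf_start[OF assms(2) path_rev[OF assms(1,3)]] assms(4) by simp



definition Sterm :: "(nat \<Rightarrow> real) \<Rightarrow> (nat \<times> nat) set \<Rightarrow> nat \<Rightarrow> nat \<Rightarrow> real" where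
  "Sterm b g a w = (if joined g a w \<and> dist g a w > 1 then b (dist g a w) else 0)"
definition Cterm :: "(nat \<Rightarrow> real) \<Rightarrow> real \<Rightarrow> nat \<Rightarrow> (nat \<times> nat) set \<Rightarrow> nat \<Rightarrow> nat \<Rightarrow> real" where
  "Cterm b \<gamma> n g a w = (if joined g a w \<and> ess_set n g a w \<noteq> {} then \<gamma> * b (dist g a w) else 0)"
definition IT :: "(nat \<Rightarrow> real) \<Rightarrow> real \<Rightarrow> nat \<Rightarrow> (nat \<times> nat) set \<Rightarrow> nat \<Rightarrow> nat \<Rightarrow> real" where
  "IT b \<gamma> n g a w = \<gamma> / real (card (ess_set n g a w)) * 2 * b (dist g a w)"
definition Pset :: "nat \<Rightarrow> (nat \<times> nat) set \<Rightarrow> nat \<Rightarrow> (nat \<times> nat) set" where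
  "Pset n g j = {(y,z). y \<in> nodes n \<and> z \<in> nodes n \<and> y < z \<and> joined g y z \<and> j \<in> ess_set n g y z}"
definition Isum :: "(nat \<Rightarrow> real) \<Rightarrow> real \<Rightarrow> nat \<Rightarrow> (nat \<times> nat) set \<Rightarrow> nat \<Rightarrow> real" where
  "Isum b \<gamma> n g j = (\<Sum>yz \<in> Pset n g j. IT b \<gamma> n g (fst yz) (snd yz))"
definition Iw :: "(nat \<Rightarrow> real) \<Rightarrow> real \<Rightarrow> nat \<Rightarrow> (nat \<times> nat) set \<Rightarrow> nat \<Rightarrow> nat \<Rightarrow> nat \<Rightarrow> real" where
  "Iw b \<gamma> n g j a w = (if joined g a w \<and> j \<in> ess_set n g a w then IT b \<gamma> n g a w else 0)"

lemma finite_nodes[simp]: "finite (nodes n)" by (simp add: nodes_def)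

lemma utility_alt:
  "utility b c \<gamma> n g j = real (degree g j) * (b 1 - c) + (\<Sum>w\<in>nodes n. Sterm b g j w)
     - (\<Sum>w\<in>nodes n. Cterm b \<gamma> n g j w) + Isum b \<gamma> n g j"
proof -
  have 1: "(\<Sum>w \<in> {w \<in> nodes n. joined g j w \<and> dist g j w > 1}. b (dist g j w)) = (\<Sum>w\<in>nodes n. Sterm b g j w)"
    unfolding Sterm_def by (simp add: sum.inter_filter)
  have 2: "(\<Sum>w \<in> {w \<in> nodes n. joined g j w \<and> ess_set n g j w \<noteq> {}}. \<gamma> * b (dist g j w)) = (\<Sum>w\<in>nodes n. Cterm b \<gamma> n g j w)"
    unfolding Cterm_def by (simp add: sum.inter_filter)
  have 3: "(\<Sum>yz \<in> {(y,z). y \<in> nodes n \<and> z \<in> nodes n \<and> y < z \<and> joined g y z \<and> j \<in> ess_set n g y z}.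
          \<gamma> / real (card (ess_set n g (fst yz) (snd yz))) * 2 * b (dist g (fst yz) (snd yz))) = Isum b \<gamma> n g j"
    unfolding Isum_def Pset_def IT_def by simp
  show ?thesis unfolding utility_def 1 2 3 by simp
qed

locale bpos = fixes b :: "nat \<Rightarrow> real" and \<gamma> :: real
  assumes bpos: "\<And>i. i \<ge> 1 \<Longrightarrow> b i > 0" and gpos: "0 \<le> \<gamma>"
begin

lemma Cterm_nonneg: "0 \<le> Cterm b \<gamma> n g a w"
proof (cases "joined g a w \<and> ess_set n g a w \<noteq> {}")
  case True then have "dist g a w \<ge> 2" by (intro ess_dist) auto
  then have "b (dist g a w) > 0" using bpos by auto
  then show ?thesis using True gpos by (simp add: Cterm_def)
next
  case False then show ?thesis by (auto simp: Cterm_def)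
qed

lemma Cterm_le: "Cterm b \<gamma> n g a w \<le> \<gamma> * Sterm b g a w"
proof (cases "joined g a w \<and> ess_set n g a w \<noteq> {}")
  case True then have "dist g a w \<ge> 2" by (intro ess_dist) auto
  then show ?thesis using True by (simp add: Cterm_def Sterm_def)
next
  case False
  show ?thesis
  proof (cases "joined g a w \<and> dist g a w > 1")
    case True
    then have "b (dist g a w) > 0" using bpos by auto
    then show ?thesis using True False gpos by (simp add: Cterm_def Sterm_def)
  next
    case False2: False
    then show ?thesis using False by (auto simp: Cterm_def Sterm_def)
  qed
qed

lemma IT_nonneg: "ess_set n g a w \<noteq> {} \<Longrightarrow> joined g a w \<Longrightarrow> 0 \<le> IT b \<gamma> n g a w"
  unfolding IT_def using ess_dist[of g a w n] bpos[of "dist g a w"] gpos by auto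

lemma Iw_nonneg: "0 \<le> Iw b \<gamma> n g j a w"
  unfolding Iw_def using IT_nonneg[of n g a w] by auto

lemma Isum_split:
  assumes sg: "symg g" and a: "a \<in> nodes n"
  shows "Isum b \<gamma> n g j = (\<Sum>w\<in>nodes n. Iw b \<gamma> n g j a w)
     + (\<Sum>yz \<in> {yz \<in> Pset n g j. fst yz \<noteq> a \<and> snd yz \<noteq> a}. IT b \<gamma> n g (fst yz) (snd yz))"
proof -
  let ?W = "{w \<in> nodes n. joined g a w \<and> j \<in> ess_set n g a w}"
  let ?h = "\<lambda>w. (min a w, max a w)"
  have fin: "finite (Pset n g j)"
    by (rule finite_subset[of _ "nodes n \<times> nodes n"]) (auto simp: Pset_def)
  have wa: "\<And>w. w \<in> ?W \<Longrightarrow> w \<noteq> a" by auto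
  have img: "{yz \<in> Pset n g j. fst yz = a \<or> snd yz = a} = ?h ` ?W"
  proof
    show "{yz \<in> Pset n g j. fst yz = a \<or> snd yz = a} \<subseteq> ?h ` ?W"
    proof clarify
      fix y z assume "(y,z) \<in> Pset n g j" "fst (y,z) = a \<or> snd (y,z) = a"
      then have H: "y \<in> nodes n" "z \<in> nodes n" "y < z" "joined g y z" "j \<in> ess_set n g y z" "y = a \<or> z = a"
        by (auto simp: Pset_def)
      show "(y,z) \<in> ?h ` ?W"
      proof (cases "y = a")
        case True then show ?thesis using H by (intro image_eqI[of _ _ z]) auto
      next
        case False then have "z = a" using H by auto
        then show ?thesis using H joined_sym[OF sg, of y z] ess_sym[OF sg, of n y z]
          by (intro image_eqI[of _ _ y]) auto
      qed
    qed
  next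
    show "?h ` ?W \<subseteq> {yz \<in> Pset n g j. fst yz = a \<or> snd yz = a}"
    proof
      fix x assume "x \<in> ?h ` ?W"
      then obtain w where w: "w \<in> nodes n" "joined g a w" "j \<in> ess_set n g a w" and xw: "x = ?h w" by blast
      then have "w \<noteq> a" by auto
      show "x \<in> {yz \<in> Pset n g j. fst yz = a \<or> snd yz = a}"
      proof (cases "a < w")
        case True
        then have "x = (a, w)" using xw by (simp add: min_def max_def)
        then show ?thesis using True w a by (simp add: Pset_def)
      next
        case False
        then have "w < a" using \<open>w \<noteq> a\<close> by simp
        then have "x = (w, a)" using xw by (simp add: min_def max_def)
        moreover have "joined g w a" using w(2) joined_sym[OF sg, of a w] by simp
        moreover have "j \<in> ess_set n g w a" using w(3) ess_sym[OF sg, of n a w] by simp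
        ultimately show ?thesis using \<open>w < a\<close> w a by (simp add: Pset_def)
      qed
    qed
  qed
  have inj: "inj_on ?h ?W"
  proof (rule inj_onI)
    fix x y assume xy: "x \<in> ?W" "y \<in> ?W" "?h x = ?h y"
    then have "x \<noteq> a" "y \<noteq> a" using wa by auto
    then show "x = y" using xy(3) by (auto simp: min_def max_def split: if_splits)
  qed
  have sym: "\<And>w. IT b \<gamma> n g (min a w) (max a w) = IT b \<gamma> n g a w"
    using dist_sym[OF sg] ess_sym[OF sg] by (auto simp: IT_def min_def max_def)
  have "(\<Sum>yz \<in> {yz \<in> Pset n g j. fst yz = a \<or> snd yz = a}. IT b \<gamma> n g (fst yz) (snd yz))
       = (\<Sum>w\<in>?W. IT b \<gamma> n g a w)"
    unfolding img by (simp add: sum.reindex[OF inj] sym)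
  also have "\<dots> = (\<Sum>w\<in>nodes n. Iw b \<gamma> n g j a w)"
    unfolding Iw_def by (simp add: sum.inter_filter)
  finally have A: "(\<Sum>yz \<in> {yz \<in> Pset n g j. fst yz = a \<or> snd yz = a}. IT b \<gamma> n g (fst yz) (snd yz))
      = (\<Sum>w\<in>nodes n. Iw b \<gamma> n g j a w)" .
  have "Isum b \<gamma> n g j = (\<Sum>yz \<in> {yz \<in> Pset n g j. fst yz = a \<or> snd yz = a}. IT b \<gamma> n g (fst yz) (snd yz))
     + (\<Sum>yz \<in> {yz \<in> Pset n g j. \<not>(fst yz = a \<or> snd yz = a)}. IT b \<gamma> n g (fst yz) (snd yz))"
    unfolding Isum_def
  proof -
    have e: "Pset n g j = {yz \<in> Pset n g j. fst yz = a \<or> snd yz = a} \<union> {yz \<in> Pset n g j. \<not>(fst yz = a \<or> snd yz = a)}" by blast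
    show "(\<Sum>yz \<in> Pset n g j. IT b \<gamma> n g (fst yz) (snd yz)) = (\<Sum>yz \<in> {yz \<in> Pset n g j. fst yz = a \<or> snd yz = a}. IT b \<gamma> n g (fst yz) (snd yz))
     + (\<Sum>yz \<in> {yz \<in> Pset n g j. \<not>(fst yz = a \<or> snd yz = a)}. IT b \<gamma> n g (fst yz) (snd yz))"
      by (subst e, rule sum.union_disjoint) (use fin in auto)
  qed
  then show ?thesis using A by simp
qed

lemma Isum_lower:
  assumes "symg g" "a \<in> nodes n"
  shows "(\<Sum>w\<in>nodes n. Iw b \<gamma> n g j a w) \<le> Isum b \<gamma> n g j"
proof -
  have "0 \<le> (\<Sum>yz \<in> {yz \<in> Pset n g j. fst yz \<noteq> a \<and> snd yz \<noteq> a}. IT b \<gamma> n g (fst yz) (snd yz))"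
    by (rule sum_nonneg) (auto simp: Pset_def intro!: IT_nonneg)
  then show ?thesis using Isum_split[OF assms] by simp
qed

lemma Isum_upper:
  assumes "symg g" "a \<in> nodes n" "\<And>y z. (y,z) \<in> Pset n g j \<Longrightarrow> y = a \<or> z = a"
  shows "Isum b \<gamma> n g j = (\<Sum>w\<in>nodes n. Iw b \<gamma> n g j a w)"
proof -
  have E: "{yz \<in> Pset n g j. fst yz \<noteq> a \<and> snd yz \<noteq> a} = {}" using assms(3) by auto
  show ?thesis using Isum_split[OF assms(1,2), of j, unfolded E] by simp
qed

end

lemma Pset_leaf_empty:
  assumes "symg g" "{w. (v,w) \<in> g} \<subseteq> {u}"
  shows "Pset n g v = {}"
proof -
  { fix y z assume H: "joined g y z" "v \<in> ess_set n g y z"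
    obtain p where p: "is_path g p y z" using H by (auto simp: joined_def)
    have "v \<in> set p" "v \<noteq> y" "v \<noteq> z" using H p by (auto simp: ess_set_def essential_def)
    then have False using leaf_interior[OF assms p] by auto }
  then show ?thesis by (auto simp: Pset_def)
qed

lemma sum_class:
  assumes "i < k" "j < k" "i \<noteq> j"
  shows "(\<Sum>w\<in>nodes (2*k). F w) = F i + F j + F (k+i) + F (k+j) + (\<Sum>z\<in>{..<k}-{i,j}. F z + F (k+z))"
proof -
  have N: "nodes (2*k) = {..<k} \<union> (\<lambda>z. k+z) ` {..<k}"
  proof
    show "nodes (2*k) \<subseteq> {..<k} \<union> (\<lambda>z. k+z) ` {..<k}"
    proof
      fix w assume w: "w \<in> nodes (2*k)"
      show "w \<in> {..<k} \<union> (\<lambda>z. k+z) ` {..<k}"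
      proof (cases "w < k")
        case True then show ?thesis by auto
      next
        case False then have "w = k + (w-k)" "w-k<k" using w by (auto simp: nodes_def)
        then show ?thesis by (metis UnI2 image_eqI lessThan_iff)
      qed
    qed
    show "{..<k} \<union> (\<lambda>z. k+z) ` {..<k} \<subseteq> nodes (2*k)" by (auto simp: nodes_def)
  qed
  have D: "{..<k} \<inter> (\<lambda>z. k+z) ` {..<k} = {}" by auto
  have "(\<Sum>w\<in>nodes (2*k). F w) = (\<Sum>z\<in>{..<k}. F z) + (\<Sum>z\<in>{..<k}. F (k+z))"
    unfolding N by (subst sum.union_disjoint) (auto simp: D sum.reindex)
  also have "\<dots> = (\<Sum>z\<in>{..<k}. F z + F (k+z))" by (simp add: sum.distrib)
  also have "\<dots> = (F i + F (k+i)) + ((F j + F (k+j)) + (\<Sum>z\<in>{..<k}-{i,j}. F z + F (k+z)))"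
  proof -
    have "(\<Sum>z\<in>{..<k}. F z + F (k+z)) = (F i + F (k+i)) + (\<Sum>z\<in>{..<k}-{i}. F z + F (k+z))"
      using assms by (subst sum.remove[of _ i]) auto
    moreover have "(\<Sum>z\<in>{..<k}-{i}. F z + F (k+z)) = (F j + F (k+j)) + (\<Sum>z\<in>{..<k}-{i}-{j}. F z + F (k+z))"
      using assms by (subst sum.remove[of _ j]) auto
    moreover have "{..<k}-{i}-{j} = {..<k}-{i,j}" by auto
    ultimately show ?thesis by simp
  qed
  finally show ?thesis by (simp add: add_ac)
qed

lemma card_rest: "i < k \<Longrightarrow> j < k \<Longrightarrow> i \<noteq> j \<Longrightarrow> card ({..<k}-{i,j}) = k - 2"
  by (subst card_Diff_subset) auto

lemma sum_class_le:
  assumes "i < k" "j < k" "i \<noteq> j"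
    and "F i \<le> A1" "F j \<le> A2" "F (k+i) \<le> A3" "F (k+j) \<le> A4"
    and "\<And>z. z < k \<Longrightarrow> z \<noteq> i \<Longrightarrow> z \<noteq> j \<Longrightarrow> F z \<le> A5"
    and "\<And>z. z < k \<Longrightarrow> z \<noteq> i \<Longrightarrow> z \<noteq> j \<Longrightarrow> F (k+z) \<le> A6"
  shows "(\<Sum>w\<in>nodes (2*k). F w) \<le> A1 + A2 + A3 + A4 + (real k - 2) * (A5 + A6)"
proof -
  have "(\<Sum>z\<in>{..<k}-{i,j}. F z + F (k+z)) \<le> (\<Sum>z\<in>{..<k}-{i,j}. A5 + A6)"
    by (rule sum_mono) (auto intro: add_mono assms)
  also have "\<dots> = (real k - 2) * (A5 + A6)" using card_rest[OF assms(1-3)] assms(1,2,3)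
    by (simp add: of_nat_diff)
  finally show ?thesis using sum_class[OF assms(1-3), of F] assms(4-7) by linarith
qed

lemma sum_class_ge:
  assumes "i < k" "j < k" "i \<noteq> j"
    and "F i \<ge> A1" "F j \<ge> A2" "F (k+i) \<ge> A3" "F (k+j) \<ge> A4"
    and "\<And>z. z < k \<Longrightarrow> z \<noteq> i \<Longrightarrow> z \<noteq> j \<Longrightarrow> F z \<ge> A5"
    and "\<And>z. z < k \<Longrightarrow> z \<noteq> i \<Longrightarrow> z \<noteq> j \<Longrightarrow> F (k+z) \<ge> A6"
  shows "(\<Sum>w\<in>nodes (2*k). F w) \<ge> A1 + A2 + A3 + A4 + (real k - 2) * (A5 + A6)"
proof -
  have "(\<Sum>z\<in>{..<k}-{i,j}. F z + F (k+z)) \<ge> (\<Sum>z\<in>{..<k}-{i,j}. A5 + A6)"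
    by (rule sum_mono) (auto intro: add_mono assms)
  moreover have "(\<Sum>z\<in>{..<k}-{i,j}. A5 + A6) = (real k - 2) * (A5 + A6)" using card_rest[OF assms(1-3)] assms(1,2,3)
    by (simp add: of_nat_diff)
  ultimately show ?thesis using sum_class[OF assms(1-3), of F] assms(4-7) by linarith
qed

lemma card_le1: "A \<subseteq> {a} \<Longrightarrow> card A \<le> 1"
  using card_mono[of "{a}" A] by simp
lemma card_le2: "A \<subseteq> {a,b} \<Longrightarrow> card A \<le> 2"
proof -
  assume "A \<subseteq> {a,b}"
  then have "card A \<le> card {a,b}" by (intro card_mono) auto
  also have "\<dots> \<le> 2" by (simp add: card_insert_if)
  finally show ?thesis .
qed
lemma card_le3: "A \<subseteq> {a,b,c} \<Longrightarrow> card A \<le> 3"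
proof -
  assume "A \<subseteq> {a,b,c}"
  then have "card A \<le> card {a,b,c}" by (intro card_mono) auto
  also have "\<dots> \<le> 3" by (simp add: card_insert_if)
  finally show ?thesis .
qed

lemma dist2I: assumes "is_path g [y,u,z] y z" "(y,z) \<notin> g" shows "dist g y z = 2"
  by (rule dist_eqI[OF assms(1)]) (use assms in \<open>auto simp: less_Suc_eq numeral_eq_Suc is_path_cons2\<close>)

lemma dist3I: assumes "is_path g [y,u,v,z] y z" "(y,z) \<notin> g" "\<And>u. (y,u) \<in> g \<Longrightarrow> (u,z) \<notin> g"
  shows "dist g y z = 3"
  by (rule dist_eqI[OF assms(1)]) (use assms in \<open>auto simp: less_Suc_eq numeral_eq_Suc is_path_cons2\<close>)

lemma dist4I: assumes "is_path g [y,u,v,w,z] y z" "(y,z) \<notin> g" "\<And>u. (y,u) \<in> g \<Longrightarrow> (u,z) \<notin> g"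
  "\<And>u v. (y,u) \<in> g \<Longrightarrow> (u,v) \<in> g \<Longrightarrow> (v,z) \<notin> g"
  shows "dist g y z = 4"
  by (rule dist_eqI[OF assms(1)]) (use assms in \<open>auto simp: less_Suc_eq numeral_eq_Suc is_path_cons2\<close>)

lemma ess_two_paths:
  assumes "is_path g p y z" "is_path g q y z" "set p \<inter> set q \<subseteq> {y,z}"
  shows "ess_set n g y z = {}"
  using ess_subset_path[OF assms(1), of n] ess_subset_path[OF assms(2), of n] assms(3) by blast

lemma (in bpos) IT_le:
  fixes m :: real
  assumes "m \<le> real (card (ess_set n g a w))" "0 < m" "dist g a w = d" "1 \<le> d"
  shows "IT b \<gamma> n g a w \<le> \<gamma> / m * 2 * b d"
proof -
  have h: "\<gamma> / real (card (ess_set n g a w)) \<le> \<gamma> / m"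
    using assms(1,2) gpos by (intro divide_left_mono) auto
  have "\<gamma> / real (card (ess_set n g a w)) * (2 * b d) \<le> \<gamma> / m * (2 * b d)"
    by (rule mult_right_mono[OF h]) (use bpos[OF assms(4)] in auto)
  then show ?thesis unfolding IT_def assms(3) by (simp only: mult.assoc)
qed

lemma (in bpos) IT_ge:
  fixes m :: real
  assumes "0 < card (ess_set n g a w)" "real (card (ess_set n g a w)) \<le> m" "dist g a w = d" "1 \<le> d"
  shows "IT b \<gamma> n g a w \<ge> \<gamma> / m * 2 * b d"
proof -
  have h: "\<gamma> / real (card (ess_set n g a w)) \<ge> \<gamma> / m"
    using assms(1,2) gpos by (intro divide_left_mono) auto
  have "\<gamma> / real (card (ess_set n g a w)) * (2 * b d) \<ge> \<gamma> / m * (2 * b d)"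
    by (rule mult_right_mono[OF h]) (use bpos[OF assms(4)] in auto)
  then show ?thesis unfolding IT_def assms(3) by (simp only: mult.assoc)
qed

lemma Sterm_val: "is_path g p a w \<Longrightarrow> dist g a w = m \<Longrightarrow> 1 < m \<Longrightarrow> Sterm b g a w = b m"
  by (auto simp: Sterm_def dest: path_joined)

lemma Sterm_adj: "(a,w) \<in> g \<Longrightarrow> a \<noteq> w \<Longrightarrow> Sterm b g a w = 0"
  by (simp add: Sterm_def dist_adj)

lemma Sterm_self: "Sterm b g a a = 0"
  by (simp add: Sterm_def)

lemma Cterm_val: "is_path g p a w \<Longrightarrow> x \<in> ess_set n g a w \<Longrightarrow> dist g a w = m \<Longrightarrow> Cterm b \<gamma> n g a w = \<gamma> * b m"
  by (auto simp: Cterm_def dest: path_joined)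

lemma Cterm_empty: "ess_set n g a w = {} \<Longrightarrow> Cterm b \<gamma> n g a w = 0"
  by (simp add: Cterm_def)


lemma sum_class_eq:
  assumes "i < k" "j < k" "i \<noteq> j"
    and "F i = A1" "F j = A2" "F (k+i) = A3" "F (k+j) = A4"
    and "\<And>z. z < k \<Longrightarrow> z \<noteq> i \<Longrightarrow> z \<noteq> j \<Longrightarrow> F z = A5"
    and "\<And>z. z < k \<Longrightarrow> z \<noteq> i \<Longrightarrow> z \<noteq> j \<Longrightarrow> F (k+z) = A6"
  shows "(\<Sum>w\<in>nodes (2*k). F w) = A1 + A2 + A3 + A4 + (real k - 2) * (A5 + A6)"
  by (intro antisym sum_class_le[OF assms(1-3)] sum_class_ge[OF assms(1-3)]) (auto simp: assms)

lemma card_ge2: "a \<in> A \<Longrightarrow> c \<in> A \<Longrightarrow> a \<noteq> c \<Longrightarrow> finite A \<Longrightarrow> 2 \<le> card A"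
  using card_mono[of A "{a,c}"] by auto

lemma (in bpos) Iw_le: "(joined g a w \<Longrightarrow> x \<in> ess_set n g a w \<Longrightarrow> IT b \<gamma> n g a w \<le> B) \<Longrightarrow> 0 \<le> B \<Longrightarrow> Iw b \<gamma> n g x a w \<le> B"
  by (auto simp: Iw_def)

lemma (in bpos) Iw_ge: "joined g a w \<Longrightarrow> x \<in> ess_set n g a w \<Longrightarrow> B \<le> IT b \<gamma> n g a w \<Longrightarrow> B \<le> Iw b \<gamma> n g x a w"
  by (auto simp: Iw_def)



definition adj :: "nat \<Rightarrow> nat \<Rightarrow> nat \<Rightarrow> bool" where
  "adj k x y \<longleftrightarrow> (x<k \<and> y<k \<and> x\<noteq>y) \<or> (x<k \<and> y = k+x) \<or> (y<k \<and> x = k+y)"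

definition star :: "nat \<Rightarrow> (nat \<times> nat) set" where
  "star k = {(x,y). adj k x y}"

lemma mem_star[simp]: "(x,y) \<in> star k \<longleftrightarrow> adj k x y"
  by (simp add: star_def)

lemma symg_star: "symg (star k)"
  by (auto simp: symg_def adj_def)

lemma symg_del: "symg g \<Longrightarrow> symg (del_link g i j)"
  by (auto simp: symg_def del_link_def)

lemma symg_add: "symg g \<Longrightarrow> symg (add_link g i j)"
  by (auto simp: symg_def add_link_def)

locale ks = bpos +
  fixes k i j :: nat
  assumes k3: "3 \<le> k" and ik: "i < k" and jk: "j < k" and ij: "i \<noteq> j"
begin

abbreviation "G \<equiv> star k"
abbreviation "GD \<equiv> del_link (star k) i j"
abbreviation "GA \<equiv> add_link (star k) (k+i) (k+j)"

lemma memGD[simp]: "(x,y) \<in> GD \<longleftrightarrow> adj k x y \<and> \<not>(x=i \<and> y=j) \<and> \<not>(x=j \<and> y=i)"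
  by (auto simp: del_link_def)

lemma memGA[simp]: "(x,y) \<in> GA \<longleftrightarrow> adj k x y \<or> (x=k+i \<and> y=k+j) \<or> (x=k+j \<and> y=k+i)"
  by (auto simp: add_link_def)

lemma third: "\<exists>z. z < k \<and> z \<noteq> i \<and> z \<noteq> j"
proof -
  have "\<exists>z\<in>{0,1,2::nat}. z \<noteq> i \<and> z \<noteq> j" by auto
  then obtain z where "z \<in> {0,1,2::nat}" "z \<noteq> i \<and> z \<noteq> j" by blast
  then show ?thesis using k3 by (intro exI[of _ z]) auto
qed

lemma nodesI: "x < 2*k \<Longrightarrow> x \<in> nodes (2*k)" by (simp add: nodes_def)

lemma deg_G_center: "degree G i = k"
proof -
  have "{w. (i,w) \<in> G} = insert (k+i) ({..<k} - {i})" using ik by (auto simp: adj_def)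
  then show ?thesis using ik by (simp add: degree_def)
qed

lemma deg_GD_center: "degree GD i = k - 1"
proof -
  have "{w. (i,w) \<in> GD} = insert (k+i) ({..<k} - {i,j})" using ik jk ij by (auto simp: adj_def)
  then show ?thesis using ik jk ij card_rest[OF ik jk ij] by (simp add: degree_def)
qed

lemma deg_G_leaf: "degree G (k+i) = 1"
proof -
  have "{w. (k+i,w) \<in> G} = {i}" using ik by (auto simp: adj_def)
  then show ?thesis by (simp add: degree_def)
qed

lemma deg_GA_leaf: "degree GA (k+i) = 2"
proof -
  have "{w. (k+i,w) \<in> GA} = {i, k+j}" using ik jk ij by (auto simp: adj_def)
  then show ?thesis using ik by (simp add: degree_def)
qed


lemma nbr_leaf_G: "t < k \<Longrightarrow> {w. (k+t,w) \<in> G} \<subseteq> {t}" by (auto simp: adj_def)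
lemma nbr_leaf_GD: "t < k \<Longrightarrow> {w. (k+t,w) \<in> GD} \<subseteq> {t}" by (auto simp: adj_def)

lemma ess_leaf_start:
  assumes "{w. (k+t,w) \<in> g} \<subseteq> {t}" "t < k" "w \<noteq> t" "w \<noteq> k+t"
  shows "t \<in> ess_set (2*k) g (k+t) w"
  by (rule ess_memI) (use assms leaf_start[OF assms(1)] in \<open>auto simp: nodes_def\<close>)

lemma ess_leaf_end:
  assumes "symg g" "{w. (k+t,w) \<in> g} \<subseteq> {t}" "t < k" "y \<noteq> t" "y \<noteq> k+t"
  shows "t \<in> ess_set (2*k) g y (k+t)"
  by (rule ess_memI) (use assms leaf_end[OF assms(1,2)] in \<open>auto simp: nodes_def\<close>)

lemma G_conn:
  assumes "y < 2*k" "z < 2*k" "y \<noteq> z" "y \<noteq> i" "z \<noteq> i" "y \<noteq> k+i" "z \<noteq> k+i"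
  shows "\<exists>p. is_path G p y z \<and> i \<notin> set p"
proof (cases "y < k")
  case yk: True
  show ?thesis
  proof (cases "z < k")
    case True then show ?thesis using yk assms
      by (intro exI[of _ "[y,z]"]) (auto simp: is_path_cons2 adj_def)
  next
    case False
    show ?thesis
    proof (cases "z = k+y")
      case True then show ?thesis using yk assms
        by (intro exI[of _ "[y,z]"]) (auto simp: is_path_cons2 adj_def)
    next
      case False2: False
      then show ?thesis using yk False assms
        by (intro exI[of _ "[y,z-k,z]"]) (auto simp: is_path_cons2 adj_def)
    qed
  qed
next
  case yk: False
  show ?thesis
  proof (cases "z < k")
    case True
    show ?thesis
    proof (cases "y = k+z")
      case True2: True then show ?thesis using yk True assms
        by (intro exI[of _ "[y,z]"]) (auto simp: is_path_cons2 adj_def)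
    next
      case False2: False
      then show ?thesis using yk True assms
        by (intro exI[of _ "[y,y-k,z]"]) (auto simp: is_path_cons2 adj_def)
    qed
  next
    case False
    then show ?thesis using yk assms
      by (intro exI[of _ "[y,y-k,z-k,z]"]) (auto simp: is_path_cons2 adj_def)
  qed
qed

lemma Pset_G_center: "(y,z) \<in> Pset (2*k) G i \<Longrightarrow> y = k+i \<or> z = k+i"
proof (rule ccontr)
  assume H: "(y,z) \<in> Pset (2*k) G i" "\<not> (y = k+i \<or> z = k+i)"
  then have h: "y < 2*k" "z < 2*k" "y < z" "essential G i y z"
    by (auto simp: Pset_def nodes_def ess_set_def)
  then obtain p where "is_path G p y z" "i \<notin> set p" using G_conn[of y z] H(2)
    by (auto simp: essential_def)
  then show False using h(4) by (auto simp: essential_def)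
qed

lemma D1: "utility b c \<gamma> (2*k) G i \<le> real k * (b 1 - c)
   + (0 + 0 + 0 + b 2 + (real k - 2) * (0 + b 2))
   - (0 + 0 + 0 + \<gamma> * b 2 + (real k - 2) * (0 + \<gamma> * b 2))
   + (0 + \<gamma> / 1 * 2 * b 2 + 0 + \<gamma> / 2 * 2 * b 3 + (real k - 2) * (\<gamma> / 1 * 2 * b 2 + \<gamma> / 2 * 2 * b 3))"
proof -
  note facts = ik jk ij
  have S: "(\<Sum>w\<in>nodes (2*k). Sterm b G i w) = 0 + 0 + 0 + b 2 + (real k - 2) * (0 + b 2)"
  proof (rule sum_class_eq[OF ik jk ij])
    show "Sterm b G i i = 0" by (rule Sterm_self)
    show "Sterm b G i j = 0" using facts by (intro Sterm_adj) (auto simp: adj_def)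
    show "Sterm b G i (k+i) = 0" using facts by (intro Sterm_adj) (auto simp: adj_def)
    have p: "is_path G [i,j,k+j] i (k+j)" using facts by (auto simp: is_path_cons2 adj_def)
    show "Sterm b G i (k+j) = b 2"
      by (rule Sterm_val[OF p]) (rule dist2I[OF p], use facts in \<open>auto simp: adj_def\<close>)
    fix z assume z: "z < k" "z \<noteq> i" "z \<noteq> j"
    show "Sterm b G i z = 0" using facts z by (intro Sterm_adj) (auto simp: adj_def)
    have p: "is_path G [i,z,k+z] i (k+z)" using facts z by (auto simp: is_path_cons2 adj_def)
    show "Sterm b G i (k+z) = b 2"
      by (rule Sterm_val[OF p]) (rule dist2I[OF p], use facts z in \<open>auto simp: adj_def\<close>)
  qed
  have C: "(\<Sum>w\<in>nodes (2*k). Cterm b \<gamma> (2*k) G i w) \<ge> 0 + 0 + 0 + \<gamma> * b 2 + (real k - 2) * (0 + \<gamma> * b 2)"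
  proof (rule sum_class_ge[OF ik jk ij])
    show "0 \<le> Cterm b \<gamma> (2*k) G i i" "0 \<le> Cterm b \<gamma> (2*k) G i j" "0 \<le> Cterm b \<gamma> (2*k) G i (k+i)"
      by (rule Cterm_nonneg)+
    have p: "is_path G [i,j,k+j] i (k+j)" using facts by (auto simp: is_path_cons2 adj_def)
    show "\<gamma> * b 2 \<le> Cterm b \<gamma> (2*k) G i (k+j)"
      using Cterm_val[OF p ess_leaf_end[OF symg_star nbr_leaf_G[OF jk] jk] dist2I[OF p]] facts
      by (auto simp: adj_def)
    fix z assume z: "z < k" "z \<noteq> i" "z \<noteq> j"
    show "0 \<le> Cterm b \<gamma> (2*k) G i z" by (rule Cterm_nonneg)
    have p: "is_path G [i,z,k+z] i (k+z)" using facts z by (auto simp: is_path_cons2 adj_def)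
    show "\<gamma> * b 2 \<le> Cterm b \<gamma> (2*k) G i (k+z)"
      using Cterm_val[OF p ess_leaf_end[OF symg_star nbr_leaf_G[OF z(1)] z(1)] dist2I[OF p]] facts z
      by (auto simp: adj_def)
  qed
  have I0: "Isum b \<gamma> (2*k) G i = (\<Sum>w\<in>nodes (2*k). Iw b \<gamma> (2*k) G i (k+i) w)"
    by (rule Isum_upper[OF symg_star]) (use ik Pset_G_center in \<open>auto simp: nodes_def\<close>)
  have I: "(\<Sum>w\<in>nodes (2*k). Iw b \<gamma> (2*k) G i (k+i) w) \<le>
     0 + \<gamma> / 1 * 2 * b 2 + 0 + \<gamma> / 2 * 2 * b 3 + (real k - 2) * (\<gamma> / 1 * 2 * b 2 + \<gamma> / 2 * 2 * b 3)"
  proof (rule sum_class_le[OF ik jk ij])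
    have b2: "b 2 > 0" "b 3 > 0" using bpos by auto
    show "Iw b \<gamma> (2*k) G i (k+i) i \<le> 0" by (rule Iw_le) (auto simp: ess_set_def essential_def)
    show "Iw b \<gamma> (2*k) G i (k+i) (k+i) \<le> 0" by (rule Iw_le) auto
    have p: "is_path G [k+i,i,j] (k+i) j" using facts by (auto simp: is_path_cons2 adj_def)
    show "Iw b \<gamma> (2*k) G i (k+i) j \<le> \<gamma> / 1 * 2 * b 2"
    proof (rule Iw_le)
      assume "i \<in> ess_set (2*k) G (k+i) j"
      then have "1 \<le> card (ess_set (2*k) G (k+i) j)" by (metis One_nat_def Suc_leI card_gt_0_iff empty_iff finite_ess)
      then show "IT b \<gamma> (2*k) G (k+i) j \<le> \<gamma> / 1 * 2 * b 2"
        using IT_le[of 1 "2*k" G "k+i" j 2] dist2I[OF p] facts by (auto simp: adj_def)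
    qed (use b2 gpos in auto)
    have p: "is_path G [k+i,i,j,k+j] (k+i) (k+j)" using facts by (auto simp: is_path_cons2 adj_def)
    show "Iw b \<gamma> (2*k) G i (k+i) (k+j) \<le> \<gamma> / 2 * 2 * b 3"
    proof (rule Iw_le)
      assume "i \<in> ess_set (2*k) G (k+i) (k+j)"
      moreover have "j \<in> ess_set (2*k) G (k+i) (k+j)"
        using ess_leaf_end[OF symg_star nbr_leaf_G[OF jk] jk] facts by auto
      ultimately have "2 \<le> card (ess_set (2*k) G (k+i) (k+j))" using ij by (intro card_ge2) auto
      then show "IT b \<gamma> (2*k) G (k+i) (k+j) \<le> \<gamma> / 2 * 2 * b 3"
        using IT_le[of 2 "2*k" G "k+i" "k+j" 3] dist3I[OF p] facts by (auto simp: adj_def)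
    qed (use b2 gpos in auto)
    fix z assume z: "z < k" "z \<noteq> i" "z \<noteq> j"
    have p: "is_path G [k+i,i,z] (k+i) z" using facts z by (auto simp: is_path_cons2 adj_def)
    show "Iw b \<gamma> (2*k) G i (k+i) z \<le> \<gamma> / 1 * 2 * b 2"
    proof (rule Iw_le)
      assume "i \<in> ess_set (2*k) G (k+i) z"
      then have "1 \<le> card (ess_set (2*k) G (k+i) z)" by (metis One_nat_def Suc_leI card_gt_0_iff empty_iff finite_ess)
      then show "IT b \<gamma> (2*k) G (k+i) z \<le> \<gamma> / 1 * 2 * b 2"
        using IT_le[of 1 "2*k" G "k+i" z 2] dist2I[OF p] facts z by (auto simp: adj_def)
    qed (use b2 gpos in auto)
    have p: "is_path G [k+i,i,z,k+z] (k+i) (k+z)" using facts z by (auto simp: is_path_cons2 adj_def)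
    show "Iw b \<gamma> (2*k) G i (k+i) (k+z) \<le> \<gamma> / 2 * 2 * b 3"
    proof (rule Iw_le)
      assume "i \<in> ess_set (2*k) G (k+i) (k+z)"
      moreover have "z \<in> ess_set (2*k) G (k+i) (k+z)"
        using ess_leaf_end[OF symg_star nbr_leaf_G[OF z(1)] z(1)] facts z by auto
      ultimately have "2 \<le> card (ess_set (2*k) G (k+i) (k+z))" using z by (intro card_ge2) auto
      then show "IT b \<gamma> (2*k) G (k+i) (k+z) \<le> \<gamma> / 2 * 2 * b 3"
        using IT_le[of 2 "2*k" G "k+i" "k+z" 3] dist3I[OF p] facts z by (auto simp: adj_def)
    qed (use b2 gpos in auto)
  qed
  show ?thesis using utility_alt[of b c \<gamma> "2*k" G i, unfolded deg_G_center] S C I0 I by linarith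
qed


lemma card_path_le:
  assumes "is_path g p y w" "set p - {y,w} \<subseteq> A" "card A \<le> m" "finite A"
  shows "real (card (ess_set n g y w)) \<le> real m"
proof -
  have "card (ess_set n g y w) \<le> card A"
    using ess_subset_path[OF assms(1), of n] assms(2,4) by (intro card_mono) auto
  then show ?thesis using assms(3) by simp
qed

lemma D2: "utility b c \<gamma> (2*k) GD i \<ge> (real k - 1) * (b 1 - c)
   + (0 + b 2 + 0 + b 3 + (real k - 2) * (0 + b 2))
   - \<gamma> * (0 + b 2 + 0 + b 3 + (real k - 2) * (0 + b 2))
   + (0 + \<gamma> / 2 * 2 * b 3 + 0 + \<gamma> / 3 * 2 * b 4 + (real k - 2) * (\<gamma> / 1 * 2 * b 2 + \<gamma> / 2 * 2 * b 3))"
proof -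
  note facts = ik jk ij
  obtain z0 where z0: "z0 < k" "z0 \<noteq> i" "z0 \<noteq> j" using third by blast
  have S: "(\<Sum>w\<in>nodes (2*k). Sterm b GD i w) = 0 + b 2 + 0 + b 3 + (real k - 2) * (0 + b 2)"
  proof (rule sum_class_eq[OF ik jk ij])
    show "Sterm b GD i i = 0" by (rule Sterm_self)
    have p: "is_path GD [i,z0,j] i j" using facts z0 by (auto simp: is_path_cons2 adj_def)
    show "Sterm b GD i j = b 2"
      by (rule Sterm_val[OF p]) (rule dist2I[OF p], use facts in \<open>auto simp: adj_def\<close>)
    show "Sterm b GD i (k+i) = 0" using facts by (intro Sterm_adj) (auto simp: adj_def)
    have p: "is_path GD [i,z0,j,k+j] i (k+j)" using facts z0 by (auto simp: is_path_cons2 adj_def)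
    show "Sterm b GD i (k+j) = b 3"
      by (rule Sterm_val[OF p]) (rule dist3I[OF p], use facts in \<open>auto simp: adj_def\<close>)
    fix z assume z: "z < k" "z \<noteq> i" "z \<noteq> j"
    show "Sterm b GD i z = 0" using facts z by (intro Sterm_adj) (auto simp: adj_def)
    have p: "is_path GD [i,z,k+z] i (k+z)" using facts z by (auto simp: is_path_cons2 adj_def)
    show "Sterm b GD i (k+z) = b 2"
      by (rule Sterm_val[OF p]) (rule dist2I[OF p], use facts z in \<open>auto simp: adj_def\<close>)
  qed
  have C: "(\<Sum>w\<in>nodes (2*k). Cterm b \<gamma> (2*k) GD i w) \<le> \<gamma> * (\<Sum>w\<in>nodes (2*k). Sterm b GD i w)"
    unfolding sum_distrib_left by (rule sum_mono) (rule Cterm_le)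
  have I0: "(\<Sum>w\<in>nodes (2*k). Iw b \<gamma> (2*k) GD i (k+i) w) \<le> Isum b \<gamma> (2*k) GD i"
    by (rule Isum_lower[OF symg_del[OF symg_star]]) (use ik in \<open>auto simp: nodes_def\<close>)
  have I: "(\<Sum>w\<in>nodes (2*k). Iw b \<gamma> (2*k) GD i (k+i) w) \<ge>
     0 + \<gamma> / 2 * 2 * b 3 + 0 + \<gamma> / 3 * 2 * b 4 + (real k - 2) * (\<gamma> / 1 * 2 * b 2 + \<gamma> / 2 * 2 * b 3)"
  proof (rule sum_class_ge[OF ik jk ij])
    show "0 \<le> Iw b \<gamma> (2*k) GD i (k+i) i" "0 \<le> Iw b \<gamma> (2*k) GD i (k+i) (k+i)" by (rule Iw_nonneg)+
    have p: "is_path GD [k+i,i,z0,j] (k+i) j" using facts z0 by (auto simp: is_path_cons2 adj_def)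
    have e: "i \<in> ess_set (2*k) GD (k+i) j" using ess_leaf_start[OF nbr_leaf_GD[OF ik] ik] facts by auto
    show "\<gamma> / 2 * 2 * b 3 \<le> Iw b \<gamma> (2*k) GD i (k+i) j"
    proof (rule Iw_ge[OF path_joined[OF p] e])
      show "\<gamma> / 2 * 2 * b 3 \<le> IT b \<gamma> (2*k) GD (k+i) j"
      proof (rule IT_ge)
        show "0 < card (ess_set (2*k) GD (k+i) j)" using e by (metis card_gt_0_iff empty_iff finite_ess)
        show "real (card (ess_set (2*k) GD (k+i) j)) \<le> 2"
          using card_path_le[OF p, of "{i,z0}" 2] card_le2[of "{i,z0}" i z0] by auto
        show "dist GD (k+i) j = 3" by (rule dist3I[OF p]) (use facts in \<open>auto simp: adj_def\<close>)
      qed simp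
    qed
    have p: "is_path GD [k+i,i,z0,j,k+j] (k+i) (k+j)" using facts z0 by (auto simp: is_path_cons2 adj_def)
    have e: "i \<in> ess_set (2*k) GD (k+i) (k+j)" using ess_leaf_start[OF nbr_leaf_GD[OF ik] ik] facts by auto
    show "\<gamma> / 3 * 2 * b 4 \<le> Iw b \<gamma> (2*k) GD i (k+i) (k+j)"
    proof (rule Iw_ge[OF path_joined[OF p] e])
      show "\<gamma> / 3 * 2 * b 4 \<le> IT b \<gamma> (2*k) GD (k+i) (k+j)"
      proof (rule IT_ge)
        show "0 < card (ess_set (2*k) GD (k+i) (k+j))" using e by (metis card_gt_0_iff empty_iff finite_ess)
        show "real (card (ess_set (2*k) GD (k+i) (k+j))) \<le> 3"
          using card_path_le[OF p, of "{i,z0,j}" 3] card_le3[of "{i,z0,j}" i z0 j] by auto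
        show "dist GD (k+i) (k+j) = 4" by (rule dist4I[OF p]) (use facts in \<open>auto simp: adj_def\<close>)
      qed simp
    qed
    fix z assume z: "z < k" "z \<noteq> i" "z \<noteq> j"
    have p: "is_path GD [k+i,i,z] (k+i) z" using facts z by (auto simp: is_path_cons2 adj_def)
    have e: "i \<in> ess_set (2*k) GD (k+i) z" using ess_leaf_start[OF nbr_leaf_GD[OF ik] ik] facts z by auto
    show "\<gamma> / 1 * 2 * b 2 \<le> Iw b \<gamma> (2*k) GD i (k+i) z"
    proof (rule Iw_ge[OF path_joined[OF p] e])
      show "\<gamma> / 1 * 2 * b 2 \<le> IT b \<gamma> (2*k) GD (k+i) z"
      proof (rule IT_ge)
        show "0 < card (ess_set (2*k) GD (k+i) z)" using e by (metis card_gt_0_iff empty_iff finite_ess)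
        show "real (card (ess_set (2*k) GD (k+i) z)) \<le> 1"
          using card_path_le[OF p, of "{i}" 1] card_le1[of "{i}" i] by auto
        show "dist GD (k+i) z = 2" by (rule dist2I[OF p]) (use facts z in \<open>auto simp: adj_def\<close>)
      qed simp
    qed
    have p: "is_path GD [k+i,i,z,k+z] (k+i) (k+z)" using facts z by (auto simp: is_path_cons2 adj_def)
    have e: "i \<in> ess_set (2*k) GD (k+i) (k+z)" using ess_leaf_start[OF nbr_leaf_GD[OF ik] ik] facts z by auto
    show "\<gamma> / 2 * 2 * b 3 \<le> Iw b \<gamma> (2*k) GD i (k+i) (k+z)"
    proof (rule Iw_ge[OF path_joined[OF p] e])
      show "\<gamma> / 2 * 2 * b 3 \<le> IT b \<gamma> (2*k) GD (k+i) (k+z)"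
      proof (rule IT_ge)
        show "0 < card (ess_set (2*k) GD (k+i) (k+z))" using e by (metis card_gt_0_iff empty_iff finite_ess)
        show "real (card (ess_set (2*k) GD (k+i) (k+z))) \<le> 2"
          using card_path_le[OF p, of "{i,z}" 2] card_le2[of "{i,z}" i z] by auto
        show "dist GD (k+i) (k+z) = 3" by (rule dist3I[OF p]) (use facts z in \<open>auto simp: adj_def\<close>)
      qed simp
    qed
  qed
  have d: "real (degree GD i) = real k - 1" using deg_GD_center k3 by (simp add: of_nat_diff)
  show ?thesis using utility_alt[of b c \<gamma> "2*k" GD i, unfolded d] S C[unfolded S] I0 I by linarith
qed


lemma A1: "utility b c \<gamma> (2*k) G (k+i) \<le> 1 * (b 1 - c)
   + (0 + b 2 + 0 + b 3 + (real k - 2) * (b 2 + b 3))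
   - (0 + \<gamma> * b 2 + 0 + \<gamma> * b 3 + (real k - 2) * (\<gamma> * b 2 + \<gamma> * b 3))"
proof -
  note facts = ik jk ij
  have S: "(\<Sum>w\<in>nodes (2*k). Sterm b G (k+i) w) = 0 + b 2 + 0 + b 3 + (real k - 2) * (b 2 + b 3)"
  proof (rule sum_class_eq[OF ik jk ij])
    show "Sterm b G (k+i) i = 0" using facts by (intro Sterm_adj) (auto simp: adj_def)
    have p: "is_path G [k+i,i,j] (k+i) j" using facts by (auto simp: is_path_cons2 adj_def)
    show "Sterm b G (k+i) j = b 2"
      by (rule Sterm_val[OF p]) (rule dist2I[OF p], use facts in \<open>auto simp: adj_def\<close>)
    show "Sterm b G (k+i) (k+i) = 0" by (rule Sterm_self)
    have p: "is_path G [k+i,i,j,k+j] (k+i) (k+j)" using facts by (auto simp: is_path_cons2 adj_def)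
    show "Sterm b G (k+i) (k+j) = b 3"
      by (rule Sterm_val[OF p]) (rule dist3I[OF p], use facts in \<open>auto simp: adj_def\<close>)
    fix z assume z: "z < k" "z \<noteq> i" "z \<noteq> j"
    have p: "is_path G [k+i,i,z] (k+i) z" using facts z by (auto simp: is_path_cons2 adj_def)
    show "Sterm b G (k+i) z = b 2"
      by (rule Sterm_val[OF p]) (rule dist2I[OF p], use facts z in \<open>auto simp: adj_def\<close>)
    have p: "is_path G [k+i,i,z,k+z] (k+i) (k+z)" using facts z by (auto simp: is_path_cons2 adj_def)
    show "Sterm b G (k+i) (k+z) = b 3"
      by (rule Sterm_val[OF p]) (rule dist3I[OF p], use facts z in \<open>auto simp: adj_def\<close>)
  qed
  have C: "(\<Sum>w\<in>nodes (2*k). Cterm b \<gamma> (2*k) G (k+i) w) \<ge> 0 + \<gamma> * b 2 + 0 + \<gamma> * b 3 + (real k - 2) * (\<gamma> * b 2 + \<gamma> * b 3)"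
  proof (rule sum_class_ge[OF ik jk ij])
    show "0 \<le> Cterm b \<gamma> (2*k) G (k+i) i" "0 \<le> Cterm b \<gamma> (2*k) G (k+i) (k+i)"
      by (rule Cterm_nonneg)+
    have p: "is_path G [k+i,i,j] (k+i) j" using facts by (auto simp: is_path_cons2 adj_def)
    show "\<gamma> * b 2 \<le> Cterm b \<gamma> (2*k) G (k+i) j"
      using Cterm_val[OF p ess_leaf_start[OF nbr_leaf_G[OF ik] ik] dist2I[OF p]] facts
      by (auto simp: adj_def)
    have p: "is_path G [k+i,i,j,k+j] (k+i) (k+j)" using facts by (auto simp: is_path_cons2 adj_def)
    show "\<gamma> * b 3 \<le> Cterm b \<gamma> (2*k) G (k+i) (k+j)"
      using Cterm_val[OF p ess_leaf_start[OF nbr_leaf_G[OF ik] ik] dist3I[OF p]] facts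
      by (auto simp: adj_def)
    fix z assume z: "z < k" "z \<noteq> i" "z \<noteq> j"
    have p: "is_path G [k+i,i,z] (k+i) z" using facts z by (auto simp: is_path_cons2 adj_def)
    show "\<gamma> * b 2 \<le> Cterm b \<gamma> (2*k) G (k+i) z"
      using Cterm_val[OF p ess_leaf_start[OF nbr_leaf_G[OF ik] ik] dist2I[OF p]] facts z
      by (auto simp: adj_def)
    have p: "is_path G [k+i,i,z,k+z] (k+i) (k+z)" using facts z by (auto simp: is_path_cons2 adj_def)
    show "\<gamma> * b 3 \<le> Cterm b \<gamma> (2*k) G (k+i) (k+z)"
      using Cterm_val[OF p ess_leaf_start[OF nbr_leaf_G[OF ik] ik] dist3I[OF p]] facts z
      by (auto simp: adj_def)
  qed
  have I: "Isum b \<gamma> (2*k) G (k+i) = 0"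
    unfolding Isum_def using Pset_leaf_empty[OF symg_star nbr_leaf_G[OF ik]] by simp
  show ?thesis using utility_alt[of b c \<gamma> "2*k" G "k+i", unfolded deg_G_leaf] S C I by simp
qed

lemma A2: "utility b c \<gamma> (2*k) GA (k+i) \<ge> 2 * (b 1 - c)
   + (0 + b 2 + 0 + 0 + (real k - 2) * (b 2 + b 3))
   - (0 + 0 + 0 + 0 + (real k - 2) * (0 + \<gamma> * b 3))"
proof -
  note facts = ik jk ij
  have sg: "symg GA" by (rule symg_add[OF symg_star])
  have S: "(\<Sum>w\<in>nodes (2*k). Sterm b GA (k+i) w) = 0 + b 2 + 0 + 0 + (real k - 2) * (b 2 + b 3)"
  proof (rule sum_class_eq[OF ik jk ij])
    show "Sterm b GA (k+i) i = 0" using facts by (intro Sterm_adj) (auto simp: adj_def)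
    have p: "is_path GA [k+i,i,j] (k+i) j" using facts by (auto simp: is_path_cons2 adj_def)
    show "Sterm b GA (k+i) j = b 2"
      by (rule Sterm_val[OF p]) (rule dist2I[OF p], use facts in \<open>auto simp: adj_def\<close>)
    show "Sterm b GA (k+i) (k+i) = 0" by (rule Sterm_self)
    show "Sterm b GA (k+i) (k+j) = 0" using facts by (intro Sterm_adj) (auto simp: adj_def)
    fix z assume z: "z < k" "z \<noteq> i" "z \<noteq> j"
    have p: "is_path GA [k+i,i,z] (k+i) z" using facts z by (auto simp: is_path_cons2 adj_def)
    show "Sterm b GA (k+i) z = b 2"
      by (rule Sterm_val[OF p]) (rule dist2I[OF p], use facts z in \<open>auto simp: adj_def\<close>)
    have p: "is_path GA [k+i,i,z,k+z] (k+i) (k+z)" using facts z by (auto simp: is_path_cons2 adj_def)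
    show "Sterm b GA (k+i) (k+z) = b 3"
      by (rule Sterm_val[OF p]) (rule dist3I[OF p], use facts z in \<open>auto simp: adj_def\<close>)
  qed
  have C: "(\<Sum>w\<in>nodes (2*k). Cterm b \<gamma> (2*k) GA (k+i) w) \<le> 0 + 0 + 0 + 0 + (real k - 2) * (0 + \<gamma> * b 3)"
  proof (rule sum_class_le[OF ik jk ij])
    show "Cterm b \<gamma> (2*k) GA (k+i) i \<le> 0"
      using facts by (subst Cterm_empty) (auto simp: adj_def intro!: ess_adj)
    show "Cterm b \<gamma> (2*k) GA (k+i) (k+i) \<le> 0" by (simp add: Cterm_empty)
    show "Cterm b \<gamma> (2*k) GA (k+i) (k+j) \<le> 0"
      using facts by (subst Cterm_empty) (auto simp: adj_def intro!: ess_adj)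
    have p: "is_path GA [k+i,i,j] (k+i) j" using facts by (auto simp: is_path_cons2 adj_def)
    have q: "is_path GA [k+i,k+j,j] (k+i) j" using facts by (auto simp: is_path_cons2 adj_def)
    show "Cterm b \<gamma> (2*k) GA (k+i) j \<le> 0"
      using facts by (subst Cterm_empty) (auto intro!: ess_two_paths[OF p q])
    fix z assume z: "z < k" "z \<noteq> i" "z \<noteq> j"
    have p: "is_path GA [k+i,i,z] (k+i) z" using facts z by (auto simp: is_path_cons2 adj_def)
    have q: "is_path GA [k+i,k+j,j,z] (k+i) z" using facts z by (auto simp: is_path_cons2 adj_def)
    show "Cterm b \<gamma> (2*k) GA (k+i) z \<le> 0"
      using facts z by (subst Cterm_empty) (auto intro!: ess_two_paths[OF p q])
    have p: "is_path GA [k+i,i,z,k+z] (k+i) (k+z)" using facts z by (auto simp: is_path_cons2 adj_def)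
    have "Sterm b GA (k+i) (k+z) = b 3"
      by (rule Sterm_val[OF p]) (rule dist3I[OF p], use facts z in \<open>auto simp: adj_def\<close>)
    then show "Cterm b \<gamma> (2*k) GA (k+i) (k+z) \<le> \<gamma> * b 3" using Cterm_le[of "2*k" GA "k+i" "k+z"] by simp
  qed
  have I: "0 \<le> Isum b \<gamma> (2*k) GA (k+i)"
    using Isum_lower[OF sg, of "k+i" "2*k" "k+i"] sum_nonneg[of "nodes (2*k)" "Iw b \<gamma> (2*k) GA (k+i) (k+i)"] Iw_nonneg ik
    by (force simp: nodes_def)
  show ?thesis using utility_alt[of b c \<gamma> "2*k" GA "k+i", unfolded deg_GA_leaf] S C I by simp
qed

end


lemma star_is_kstar: assumes "3 \<le> k" shows "k_star_network k (2*k) (star k)"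
  unfolding k_star_network_def
proof (intro conjI exI[of _ "{..<k}"])
  show "2*k \<le> 2*k" by simp
  show "is_network (2*k) (star k)"
    by (auto simp: is_network_def adj_def nodes_def)
  show "{..<k} \<subseteq> nodes (2*k)" by (auto simp: nodes_def)
  show "card {..<k} = k" by simp
  show "\<forall>x\<in>{..<k}. \<forall>y\<in>{..<k}. x \<noteq> y \<longrightarrow> (x, y) \<in> star k" by (auto simp: adj_def)
  show "\<forall>v\<in>nodes (2*k) - {..<k}. \<exists>x\<in>{..<k}. {w. (v, w) \<in> star k} = {x}"
  proof
    fix v assume v: "v \<in> nodes (2*k) - {..<k}"
    then have "v - k < k" "{w. (v, w) \<in> star k} = {v - k}" by (auto simp: nodes_def adj_def)
    then show "\<exists>x\<in>{..<k}. {w. (v, w) \<in> star k} = {x}" by blast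
  qed
  have L: "\<And>x. x \<in> {..<k} \<Longrightarrow> {v \<in> nodes (2*k) - {..<k}. (x, v) \<in> star k} = {k+x}"
    by (auto simp: nodes_def adj_def)
  show "\<forall>x\<in>{..<k}. {v \<in> nodes (2*k) - {..<k}. (x, v) \<in> star k} \<noteq> {}" using L by auto
  show "\<forall>x\<in>{..<k}. \<forall>y\<in>{..<k}. card {v \<in> nodes (2*k) - {..<k}. (x, v) \<in> star k}
                              \<le> card {v \<in> nodes (2*k) - {..<k}. (y, v) \<in> star k} + 1" using L by auto
qed

theorem lemma1:
  fixes k :: nat and b :: "nat \<Rightarrow> real" and c \<gamma> :: real
  assumes "k \<ge> 3"
    and "\<forall>i \<ge> 1. b i > b (Suc i)"
    and "\<forall>i \<ge> 1. b i > 0"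
    and "0 \<le> \<gamma>" and "\<gamma> < 1"
    and "\<forall>n g. n \<ge> 2 * k \<longrightarrow> k_star_network k n g \<longrightarrow> pairwise_stable b c \<gamma> n g"
  shows "\<gamma> = 0 \<and> c = b 1 - b 3"
proof -
  interpret K01: ks b \<gamma> k 0 1 using assms by unfold_locales auto
  interpret K10: ks b \<gamma> k 1 0 using assms by unfold_locales auto
  have st: "pairwise_stable b c \<gamma> (2*k) (star k)"
    using assms(6) star_is_kstar[OF assms(1)] by auto
  have del: "utility b c \<gamma> (2*k) (del_link (star k) 0 1) 0 \<le> utility b c \<gamma> (2*k) (star k) 0"
    using st assms(1) unfolding pairwise_stable_def by (auto simp: adj_def)
  have addl: "utility b c \<gamma> (2*k) (add_link (star k) k (k+1)) k > utility b c \<gamma> (2*k) (star k) k \<longrightarrow>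
      utility b c \<gamma> (2*k) (add_link (star k) k (k+1)) (k+1) < utility b c \<gamma> (2*k) (star k) (k+1)"
    using st assms(1) unfolding pairwise_stable_def by (auto simp: adj_def nodes_def)
  have ga: "add_link (star k) (k+1) (k+0) = add_link (star k) k (k+1)" by (auto simp: add_link_def)
  note D1 = K01.D1[of c] and D2 = K01.D2[of c]
  note A1a = K01.A1[of c, unfolded add_0_right] and A2a = K01.A2[of c, unfolded add_0_right]
  note A1b = K10.A1[of c] and A2b = K10.A2[of c, unfolded ga]
  define K where "K = real k"
  have K3: "K \<ge> 3" using assms(1) by (simp add: K_def)
  have bp: "b 2 > 0" "b 3 > 0" "b 4 > 0" using assms(3) by auto
  let ?X = "b 1 - c - b 3 + \<gamma> * (2 * b 2 + b 3 - 2/3 * b 4)"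
  let ?Y = "b 1 - c - b 3 + \<gamma> * ((K - 1) * b 2 + b 3)"
  have eX: "real k * (b 1 - c)
   + (0 + 0 + 0 + b 2 + (real k - 2) * (0 + b 2))
   - (0 + 0 + 0 + \<gamma> * b 2 + (real k - 2) * (0 + \<gamma> * b 2))
   + (0 + \<gamma> / 1 * 2 * b 2 + 0 + \<gamma> / 2 * 2 * b 3 + (real k - 2) * (\<gamma> / 1 * 2 * b 2 + \<gamma> / 2 * 2 * b 3))
   - ((real k - 1) * (b 1 - c)
   + (0 + b 2 + 0 + b 3 + (real k - 2) * (0 + b 2))
   - \<gamma> * (0 + b 2 + 0 + b 3 + (real k - 2) * (0 + b 2))
   + (0 + \<gamma> / 2 * 2 * b 3 + 0 + \<gamma> / 3 * 2 * b 4 + (real k - 2) * (\<gamma> / 1 * 2 * b 2 + \<gamma> / 2 * 2 * b 3))) = ?X"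
    by (simp add: K_def field_simps)
  have X: "0 \<le> ?X" using D1 D2 del eX by linarith
  have eY: "2 * (b 1 - c)
   + (0 + b 2 + 0 + 0 + (real k - 2) * (b 2 + b 3))
   - (0 + 0 + 0 + 0 + (real k - 2) * (0 + \<gamma> * b 3))
   - (1 * (b 1 - c)
   + (0 + b 2 + 0 + b 3 + (real k - 2) * (b 2 + b 3))
   - (0 + \<gamma> * b 2 + 0 + \<gamma> * b 3 + (real k - 2) * (\<gamma> * b 2 + \<gamma> * b 3))) = ?Y"
    by (simp add: K_def field_simps)
  have Y: "?Y \<le> 0"
  proof (rule ccontr)
    assume "\<not> ?Y \<le> 0"
    then have "utility b c \<gamma> (2*k) (add_link (star k) k (k+1)) k > utility b c \<gamma> (2*k) (star k) k"
      using A1a A2a eY by linarith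
    moreover have "utility b c \<gamma> (2*k) (add_link (star k) k (k+1)) (k+1) > utility b c \<gamma> (2*k) (star k) (k+1)"
      using A1b A2b eY \<open>\<not> ?Y \<le> 0\<close> by linarith
    ultimately show False using addl less_asym by blast
  qed
  have "\<gamma> * ((K - 3) * b 2 + 2/3 * b 4) = ?Y - ?X" by (simp add: field_simps)
  then have le: "\<gamma> * ((K - 3) * b 2 + 2/3 * b 4) \<le> 0" using X Y by linarith
  have "(K - 3) * b 2 \<ge> 0" using K3 bp by (intro mult_nonneg_nonneg) auto
  then have pos: "(K - 3) * b 2 + 2/3 * b 4 > 0" using bp by linarith
  have g0: "\<gamma> = 0"
  proof (rule ccontr)
    assume "\<gamma> \<noteq> 0" then have "\<gamma> > 0" using assms(4) by simp
    then have "\<gamma> * ((K - 3) * b 2 + 2/3 * b 4) > 0" using pos by (intro mult_pos_pos)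
    then show False using le by linarith
  qed
  then show ?thesis using X Y by simp
qed


end
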